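(* Let $\mathcal{G}=(\mathcal{V},\mathcal{A})$, $|\mathcal{V}|=n$, be the information-flow graph of a single-sender single-uniprior index-coding instance in which every message consists of a single bit ($q_i=1$ for all $i$). Then \[ \ell^*(\mathcal{G}) = n - |\mathcal{L}(\mathcal{G})| - N_{\mathrm{SCC}}(\mathcal{G}), \] where $N_{\mathrm{SCC}}(\mathcal{G})$ is the number of leaf SCCs of $\mathcal{G}$.
   Context: Single-sender single-uniprior index coding: there are $n$ receivers and $n$ independent messages $x_1,\dots,x_n$; message $x_i$ consists of $q_i\ge 1$ bits, each independently uniformly distributed on $\{0,1\}$. A single sender knows all messages. Receiver $i$ knows $x_i$ a priori and requests a set $\mathcal{W}_i$ of messages with $x_i\notin\mathcal{W}_i$. The information-flow graph is the directed graph $\mathcal{G}=(\mathcal{V},\mathcal{A})$ with $\mathcal{V}=\{1,\dots,n\}$ and an arc $(j\to i)\in\mathcal{A}$ iff $x_j\in\mathcal{W}_i$. An index code of length $\ell$ consists of an encoding function $E:\{0,1\}^{\sum_i q_i}\to\{0,1\}^\ell$ and, for each receiver $i$, a decoding function $D_i$ such that $D_i(E(x_1,\dots,x_n),x_i)$ equals the tuple of messages in $\mathcal{W}_i$ for all values of the messages. $\ell^*(\mathcal{G})$ denotes the minimum length of an index code. A leaf vertex is a vertex with no outgoing arcs; $\mathcal{L}(\mathcal{G})$ is the set of leaf vertices. A strongly connected component (SCC) is a maximal subgraph in which every ordered pair of vertices is joined by a directed path inside the subgraph. A leaf SCC is an SCC with at least two vertices from which no arc goes to a vertex outside the SCC.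 *)

theory Defs
  imports Main
begin

text \<open>Information-flow graph on vertex set {1..n}; arcs A :: (nat \<times> nat) set,
  (j,i) \<in> A iff receiver i requests message x_j.\<close>

definition msgs :: "nat \<Rightarrow> (nat \<Rightarrow> bool) set" where
  "msgs n = {x. \<forall>j. j \<notin> {1..n} \<longrightarrow> x j = False}"

definition wants :: "(nat \<times> nat) set \<Rightarrow> nat \<Rightarrow> nat set" where
  "wants A i = {j. (j, i) \<in> A}"

text \<open>An index code of length l: an encoder E into bit strings of length l
  and decoders D i, where D i receives the codeword and x_i and outputs
  (as a function of the index) the requested messages.\<close>
definition is_index_code ::
  "nat \<Rightarrow> (nat \<times> nat) set \<Rightarrow> nat \<Rightarrow> ((nat \<Rightarrow> bool) \<Rightarrow> bool list)
     \<Rightarrow> (nat \<Rightarrow> bool list \<Rightarrow> bool \<Rightarrow> nat \<Rightarrow> bool) \<Rightarrow> bool" where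
  "is_index_code n A l E D \<longleftrightarrow>
     (\<forall>x \<in> msgs n. length (E x) = l) \<and>
     (\<forall>x \<in> msgs n. \<forall>i \<in> {1..n}. \<forall>j \<in> wants A i. D i (E x) (x i) j = x j)"

definition has_index_code :: "nat \<Rightarrow> (nat \<times> nat) set \<Rightarrow> nat \<Rightarrow> bool" where
  "has_index_code n A l \<longleftrightarrow> (\<exists>E D. is_index_code n A l E D)"

definition opt_len :: "nat \<Rightarrow> (nat \<times> nat) set \<Rightarrow> nat" where
  "opt_len n A = (LEAST l. has_index_code n A l)"

definition leaf_vertices :: "nat \<Rightarrow> (nat \<times> nat) set \<Rightarrow> nat set" where
  "leaf_vertices n A = {i \<in> {1..n}. \<not> (\<exists>j. (i, j) \<in> A)}"

definition strongly_connected :: "(nat \<times> nat) set \<Rightarrow> nat set \<Rightarrow> bool" where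
  "strongly_connected A S \<longleftrightarrow>
     (\<forall>u \<in> S. \<forall>v \<in> S. (u, v) \<in> (A \<inter> (S \<times> S))\<^sup>*)"

definition is_scc :: "nat \<Rightarrow> (nat \<times> nat) set \<Rightarrow> nat set \<Rightarrow> bool" where
  "is_scc n A S \<longleftrightarrow> S \<noteq> {} \<and> S \<subseteq> {1..n} \<and> strongly_connected A S \<and>
     (\<forall>T. S \<subseteq> T \<and> T \<subseteq> {1..n} \<and> strongly_connected A T \<longrightarrow> T = S)"

definition is_leaf_scc :: "nat \<Rightarrow> (nat \<times> nat) set \<Rightarrow> nat set \<Rightarrow> bool" where
  "is_leaf_scc n A S \<longleftrightarrow> is_scc n A S \<and> card S \<ge> 2 \<and>
     (\<forall>u v. u \<in> S \<and> (u, v) \<in> A \<longrightarrow> v \<in> S)"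

definition N_SCC :: "nat \<Rightarrow> (nat \<times> nat) set \<Rightarrow> nat" where
  "N_SCC n A = card {S. is_leaf_scc n A S}"

end

theory Submission
  imports Defs
begin

locale ig =
  fixes n :: nat and A :: "(nat \<times> nat) set"
  assumes sub: "A \<subseteq> {1..n} \<times> {1..n}" and noloop: "\<forall>i. (i,i) \<notin> A"
begin

definition "F = {S. is_leaf_scc n A S}"
definition "L = leaf_vertices n A"
definition "NL = {1..n} - L"
definition "reps = Min ` F"
definition "S0 = NL - reps"
definition "T = L \<union> reps"
definition "U = \<Union>F"

lemma F_facts:
  assumes "S \<in> F"
  shows "S \<noteq> {}" "S \<subseteq> {1..n}" "finite S" "card S \<ge> 2" "strongly_connected A S"
    "\<And>u v. u\<in>S \<Longrightarrow> (u,v)\<in>A \<Longrightarrow> v\<in>S"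
    "\<And>T. S \<subseteq> T \<Longrightarrow> T \<subseteq> {1..n} \<Longrightarrow> strongly_connected A T \<Longrightarrow> T = S"
  using assms unfolding F_def is_leaf_scc_def is_scc_def
  by (auto intro: finite_subset[of S "{1..n}"])

lemma sc_union:
  assumes "strongly_connected A S" "strongly_connected A S'" "w \<in> S" "w \<in> S'"
  shows "strongly_connected A (S \<union> S')"
proof -
  have m1: "(A \<inter> S\<times>S)\<^sup>* \<subseteq> (A \<inter> (S\<union>S')\<times>(S\<union>S'))\<^sup>*" by (rule rtrancl_mono) blast
  have m2: "(A \<inter> S'\<times>S')\<^sup>* \<subseteq> (A \<inter> (S\<union>S')\<times>(S\<union>S'))\<^sup>*" by (rule rtrancl_mono) blast
  show ?thesis unfolding strongly_connected_def
  proof (intro ballI)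
    fix u v assume u: "u \<in> S \<union> S'" and v: "v \<in> S \<union> S'"
    show "(u, v) \<in> (A \<inter> (S \<union> S') \<times> (S \<union> S'))\<^sup>*"
    proof (cases "u \<in> S")
      case True
      then have uw: "(u,w) \<in> (A \<inter> (S\<union>S')\<times>(S\<union>S'))\<^sup>*"
        using assms m1 unfolding strongly_connected_def by blast
      show ?thesis
      proof (cases "v \<in> S")
        case True
        then show ?thesis using \<open>u\<in>S\<close> assms m1 unfolding strongly_connected_def by blast
      next
        case False
        then have "v \<in> S'" using v by blast
        then have "(w,v) \<in> (A \<inter> (S\<union>S')\<times>(S\<union>S'))\<^sup>*"
          using assms m2 unfolding strongly_connected_def by blast
        then show ?thesis using uw by (meson rtrancl_trans)
      qed
    next
      case False
      then have uS': "u \<in> S'" using u by blast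
      then have uw: "(u,w) \<in> (A \<inter> (S\<union>S')\<times>(S\<union>S'))\<^sup>*"
        using assms m2 unfolding strongly_connected_def by blast
      show ?thesis
      proof (cases "v \<in> S'")
        case True
        then show ?thesis using uS' assms m2 unfolding strongly_connected_def by blast
      next
        case False
        then have "v \<in> S" using v by blast
        then have "(w,v) \<in> (A \<inter> (S\<union>S')\<times>(S\<union>S'))\<^sup>*"
          using assms m1 unfolding strongly_connected_def by blast
        then show ?thesis using uw by (meson rtrancl_trans)
      qed
    qed
  qed
qed

lemma F_disj:
  assumes "S \<in> F" "S' \<in> F" "x \<in> S" "x \<in> S'"
  shows "S = S'"
proof -
  have sc: "strongly_connected A (S \<union> S')"
    using sc_union F_facts(5)[OF assms(1)] F_facts(5)[OF assms(2)] assms(3,4) by blast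
  have sub2: "S \<union> S' \<subseteq> {1..n}" using F_facts(2)[OF assms(1)] F_facts(2)[OF assms(2)] by blast
  have "S \<union> S' = S" using F_facts(7)[OF assms(1) _ sub2 sc] by blast
  moreover have "S \<union> S' = S'" using F_facts(7)[OF assms(2) _ sub2 sc] by blast
  ultimately show ?thesis by blast
qed

lemma F_NL:
  assumes "S \<in> F" "u \<in> S"
  shows "u \<in> NL"
proof -
  have fin: "finite S" using F_facts(3)[OF assms(1)] .
  have "\<not> S \<subseteq> {u}"
  proof
    assume "S \<subseteq> {u}"
    then have "card S \<le> card {u}" by (rule card_mono[rotated]) simp
    then show False using F_facts(4)[OF assms(1)] by simp
  qed
  then obtain v where v: "v \<in> S" "v \<noteq> u" by blast
  have "(u,v) \<in> (A \<inter> S\<times>S)\<^sup>*" using F_facts(5)[OF assms(1)] assms(2) v(1)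
    unfolding strongly_connected_def by blast
  then obtain w where "(u,w) \<in> A \<inter> S\<times>S"
    using v(2) by (metis converse_rtranclE)
  then have "(u,w) \<in> A" by blast
  moreover have "u \<in> {1..n}" using F_facts(2)[OF assms(1)] assms(2) by blast
  ultimately show ?thesis unfolding NL_def L_def leaf_vertices_def by blast
qed

lemma finite_F: "finite F"
proof -
  have "F \<subseteq> Pow {1..n}" using F_facts(2) by blast
  then show ?thesis by (rule finite_subset) simp
qed

lemma Min_in_F: assumes "S \<in> F" shows "Min S \<in> S"
  by (rule Min_in[OF F_facts(3)[OF assms] F_facts(1)[OF assms]])

lemma reps_sub: "reps \<subseteq> NL"
  unfolding reps_def using Min_in_F F_NL by blast

lemma reps_U: "reps \<subseteq> U"
  unfolding reps_def U_def using Min_in_F by blast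

lemma card_reps: "card reps = card F"
proof -
  have "inj_on Min F"
    by (rule inj_onI) (metis F_disj Min_in_F)
  then show ?thesis unfolding reps_def by (rule card_image)
qed

lemma L_sub: "L \<subseteq> {1..n}" unfolding L_def leaf_vertices_def by blast

lemma card_S0: "card S0 + card L + card F = n"
proof -
  have fNL: "finite NL" unfolding NL_def by simp
  have fr: "finite reps" using finite_subset[OF reps_sub fNL] .
  have c1: "card S0 = card NL - card reps" unfolding S0_def
    using card_Diff_subset[OF fr reps_sub] .
  have c2: "card NL = n - card L" unfolding NL_def
    using card_Diff_subset[OF _ L_sub] finite_subset[OF L_sub] by simp
  have c3: "card reps \<le> card NL" using card_mono[OF fNL reps_sub] .
  have c4: "card L \<le> n" using card_mono[OF _ L_sub] by simp
  show ?thesis using c1 c2 c3 c4 card_reps by linarith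
qed

lemma reach_sub: "(v,u) \<in> A\<^sup>* \<Longrightarrow> v \<in> {1..n} \<Longrightarrow> u \<in> {1..n}"
  by (induction rule: rtrancl_induct) (use sub in auto)

lemma stay:
  assumes "\<forall>a\<in>C. \<forall>b. (a,b)\<in>A \<longrightarrow> b\<in>C"
  shows "(u,v)\<in>A\<^sup>* \<Longrightarrow> u\<in>C \<Longrightarrow> (u,v)\<in>(A\<inter>C\<times>C)\<^sup>* \<and> v\<in>C"
proof (induction rule: rtrancl_induct)
  case base then show ?case by simp
next
  case (step y z)
  then have "z \<in> C" using assms by blast
  then have "(y,z) \<in> A\<inter>C\<times>C" using step by blast
  then show ?case using step \<open>z\<in>C\<close> by (meson rtrancl.rtrancl_into_rtrancl)
qed

lemma reach_T:
  assumes v: "v \<in> {1..n}"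
  shows "\<exists>t\<in>T. (v,t)\<in>A\<^sup>*"
proof -
  define Rch where "Rch w = {u. (w,u) \<in> A\<^sup>*}" for w
  have Rsub: "Rch w \<subseteq> {1..n}" if "w \<in> {1..n}" for w
    using reach_sub that unfolding Rch_def by blast
  have "v \<in> Rch v" unfolding Rch_def by simp
  then obtain w where w: "w \<in> Rch v" and wmin: "\<forall>w'. w' \<in> Rch v \<longrightarrow> card (Rch w) \<le> card (Rch w')"
    using ex_has_least_nat[of "\<lambda>w. w \<in> Rch v" v "\<lambda>w. card (Rch w)"] by blast
  have wn: "w \<in> {1..n}" using Rsub[OF v] w by blast
  define C where "C = Rch w"
  have finC: "finite C" unfolding C_def using Rsub[OF wn] finite_subset by blast
  have Csub: "C \<subseteq> {1..n}" unfolding C_def using Rsub[OF wn] .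
  have wC: "w \<in> C" unfolding C_def Rch_def by simp
  have bk: "(u,w) \<in> A\<^sup>*" if uC: "u \<in> C" for u
  proof -
    have "u \<in> Rch v" using uC w unfolding C_def Rch_def by (auto intro: rtrancl_trans)
    then have c: "card C \<le> card (Rch u)" using wmin unfolding C_def by blast
    have "Rch u \<subseteq> C" using uC unfolding C_def Rch_def by (auto intro: rtrancl_trans)
    with c have "Rch u = C" using finC by (meson card_seteq)
    then show ?thesis using wC unfolding Rch_def by blast
  qed
  have closed: "\<forall>a\<in>C. \<forall>b. (a,b)\<in>A \<longrightarrow> b\<in>C"
    unfolding C_def Rch_def by (auto intro: rtrancl_into_rtrancl)
  have vw: "(v,w) \<in> A\<^sup>*" using w unfolding Rch_def by simp
  show ?thesis
  proof (cases "card C \<ge> 2")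
    case True
    have sc: "strongly_connected A C" unfolding strongly_connected_def
    proof (intro ballI)
      fix u u' assume "u \<in> C" "u' \<in> C"
      then have "(u,u') \<in> A\<^sup>*" using bk unfolding C_def Rch_def by (auto intro: rtrancl_trans)
      then show "(u,u') \<in> (A\<inter>C\<times>C)\<^sup>*" using stay[of C u u', OF closed] \<open>u\<in>C\<close> by blast
    qed
    have max: "T' = C" if "C \<subseteq> T'" "T' \<subseteq> {1..n}" "strongly_connected A T'" for T'
    proof -
      have "T' \<subseteq> C"
      proof
        fix t assume "t \<in> T'"
        then have "(w,t) \<in> (A\<inter>T'\<times>T')\<^sup>*" using that wC unfolding strongly_connected_def by blast
        then have "(w,t) \<in> A\<^sup>*" using rtrancl_mono[of "A\<inter>T'\<times>T'" A] by blast
        then show "t \<in> C" unfolding C_def Rch_def by simp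
      qed
      then show ?thesis using that by blast
    qed
    have "is_scc n A C" unfolding is_scc_def using wC Csub sc max by blast
    then have "is_leaf_scc n A C" unfolding is_leaf_scc_def using True closed by blast
    then have "C \<in> F" unfolding F_def by simp
    then have "Min C \<in> T" unfolding T_def reps_def by blast
    moreover have "(v, Min C) \<in> A\<^sup>*"
    proof -
      have "Min C \<in> C" using Min_in_F[OF \<open>C\<in>F\<close>] .
      then have "(w, Min C) \<in> A\<^sup>*" unfolding C_def Rch_def by simp
      then show ?thesis using vw by (meson rtrancl_trans)
    qed
    ultimately show ?thesis by blast
  next
    case False
    have "C = {w}"
    proof -
      have "card C \<le> 1" using False by simp
      then show ?thesis using wC card_le_Suc0_iff_eq[OF finC] by auto
    qed
    then have "\<not> (\<exists>j. (w,j) \<in> A)" using closed noloop by blast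
    then have "w \<in> L" unfolding L_def leaf_vertices_def using wn by blast
    then show ?thesis unfolding T_def using vw by blast
  qed
qed

lemma lower:
  assumes code: "is_index_code n A l E D"
  shows "card S0 \<le> l"
proof -
  define X0 where "X0 = {x. \<forall>j. j \<notin> S0 \<longrightarrow> x j = False}"
  have S0sub: "S0 \<subseteq> {1..n}" unfolding S0_def NL_def by blast
  have X0msgs: "X0 \<subseteq> msgs n" unfolding X0_def msgs_def using S0sub by blast
  have TS0: "t \<notin> S0" if "t \<in> T" for t
    using that reps_sub unfolding T_def S0_def NL_def by blast
  have inj: "inj_on E X0"
  proof (rule inj_onI)
    fix x y assume x: "x \<in> X0" and y: "y \<in> X0" and E: "E x = E y"
    have xm: "x \<in> msgs n" and ym: "y \<in> msgs n" using x y X0msgs by blast+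
    show "x = y"
    proof
      fix j
      show "x j = y j"
      proof (cases "j \<in> S0")
        case False then show ?thesis using x y unfolding X0_def by blast
      next
        case True
        then obtain t where t: "t \<in> T" "(j,t) \<in> A\<^sup>*" using reach_T S0sub by blast
        have "x t = y t" using TS0[OF t(1)] x y unfolding X0_def by blast
        from t(2) this show ?thesis
        proof (induction rule: converse_rtrancl_induct)
          case base then show ?case .
        next
          case (step v v')
          have v'n: "v' \<in> {1..n}" using step(1) sub by blast
          have vw: "v \<in> wants A v'" unfolding wants_def using step(1) by simp
          have "D v' (E x) (x v') v = x v" using code xm v'n vw unfolding is_index_code_def by blast
          moreover have "D v' (E y) (y v') v = y v" using code ym v'n vw unfolding is_index_code_def by blast
          ultimately show ?case using step E by simp
        qed
      qed
    qed
  qed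
  have img: "E ` X0 \<subseteq> {xs. set xs \<subseteq> UNIV \<and> length xs = l}"
    using code X0msgs unfolding is_index_code_def by blast
  have "card X0 \<le> card {xs. set xs \<subseteq> (UNIV::bool set) \<and> length xs = l}"
    by (rule card_inj_on_le[OF inj img]) (rule finite_lists_length_eq, simp)
  also have "\<dots> = 2 ^ l" using card_lists_length_eq[of "UNIV::bool set" l] by simp
  finally have c1: "card X0 \<le> 2 ^ l" .
  have "bij_betw (\<lambda>x. {j. x j}) X0 (Pow S0)"
    by (rule bij_betw_byWitness[where f' = "\<lambda>T j. j \<in> T"]) (auto simp: X0_def)
  then have "card X0 = card (Pow S0)" by (rule bij_betw_same_card)
  also have "\<dots> = 2 ^ card S0" using finite_subset[OF S0sub] by (simp add: card_Pow)
  finally have "(2::nat) ^ card S0 \<le> 2 ^ l" using c1 by simp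
  then show ?thesis by (rule power_le_imp_le_exp[rotated]) simp
qed

definition "rp j = Min (THE S. S \<in> F \<and> j \<in> S)"

lemma rp: "S \<in> F \<Longrightarrow> j \<in> S \<Longrightarrow> rp j = Min S"
  unfolding rp_def by (rule arg_cong[where f=Min], rule the_equality) (use F_disj in metis)+

definition "xs = sorted_list_of_set S0"
definition "pos i = (LEAST k. xs ! k = i)"

lemma finS0: "finite S0" unfolding S0_def NL_def by simp

lemma pos: assumes "i \<in> S0" shows "pos i < length xs" "xs ! pos i = i"
proof -
  have "i \<in> set xs" unfolding xs_def using assms finS0 by simp
  then obtain k where k: "k < length xs" "xs ! k = i" by (metis in_set_conv_nth)
  show "xs ! pos i = i" unfolding pos_def using k(2) by (rule LeastI)
  have "pos i \<le> k" unfolding pos_def using k by (intro Least_le) simp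
  then show "pos i < length xs" using k by simp
qed

definition "gE x i = (if i \<in> U then x i \<noteq> x (rp i) else x i)"
definition "Enc x = map (gE x) xs"
definition "Dec r w b j = (if j \<in> U then (let p = rp j; xp = (if r = p then b else (w ! pos r) \<noteq> b)
   in if j = p then xp else (w ! pos j) \<noteq> xp) else w ! pos j)"

lemma Enc_pos: "i \<in> S0 \<Longrightarrow> Enc x ! pos i = gE x i"
  unfolding Enc_def using pos by simp

lemma upper: "has_index_code n A (card S0)"
  unfolding has_index_code_def
proof (intro exI)
  show "is_index_code n A (card S0) Enc Dec"
    unfolding is_index_code_def
  proof (intro conjI ballI)
    fix x show "length (Enc x) = card S0" unfolding Enc_def xs_def by simp
  next
    fix x r j assume xm: "x \<in> msgs n" and r: "r \<in> {1..n}" and j: "j \<in> wants A r"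
    have jr: "(j,r) \<in> A" using j unfolding wants_def by simp
    show "Dec r (Enc x) (x r) j = x j"
    proof (cases "j \<in> U")
      case True
      then obtain S where S: "S \<in> F" "j \<in> S" unfolding U_def by blast
      have rS: "r \<in> S" using F_facts(6)[OF S(1) S(2) jr] .
      have rpj: "rp j = Min S" using rp[OF S] .
      have rpr: "rp r = Min S" using rp[OF S(1) rS] .
      have inS0: "u \<in> S0" if "u \<in> S" "u \<noteq> Min S" for u
      proof -
        have "u \<notin> reps"
        proof
          assume "u \<in> reps"
          then obtain S' where "S' \<in> F" "u = Min S'" unfolding reps_def by blast
          then have "u \<in> S'" using Min_in_F by simp
          then have "S' = S" using F_disj \<open>S' \<in> F\<close> S(1) that(1) by blast
          then show False using that \<open>u = Min S'\<close> by simp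
        qed
        then show ?thesis unfolding S0_def using F_NL[OF S(1) that(1)] by blast
      qed
      have rU: "r \<in> U" unfolding U_def using S(1) rS by blast
      have xp: "(if r = Min S then x r else (Enc x ! pos r) \<noteq> x r) = x (Min S)"
      proof (cases "r = Min S")
        case False
        then show ?thesis using Enc_pos[OF inS0[OF rS False]] rU rpr unfolding gE_def by auto
      qed simp
      show ?thesis
      proof (cases "j = Min S")
        case True
        then show ?thesis using xp \<open>j\<in>U\<close> rpj unfolding Dec_def Let_def by simp
      next
        case False
        then show ?thesis using xp \<open>j\<in>U\<close> rpj Enc_pos[OF inS0[OF S(2) False]]
          unfolding Dec_def Let_def gE_def by auto
      qed
    next
      case False
      have jn: "j \<in> {1..n}" using jr sub by blast
      have "j \<in> NL" unfolding NL_def L_def leaf_vertices_def using jn jr by blast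
      then have "j \<in> S0" unfolding S0_def using reps_U False by blast
      then show ?thesis using Enc_pos False unfolding Dec_def gE_def by simp
    qed
  qed
qed

lemma opt: "opt_len n A = card S0"
  unfolding opt_len_def
  by (rule Least_equality) (use upper lower has_index_code_def in blast)+

end

theorem corollary1:
  fixes n :: nat and A :: "(nat \<times> nat) set"
  assumes "A \<subseteq> {1..n} \<times> {1..n}"
    and "\<forall>i. (i, i) \<notin> A"
  shows "int (opt_len n A) = int n - int (card (leaf_vertices n A)) - int (N_SCC n A)"
proof -
  interpret ig n A using assms by unfold_locales
  have "card S0 + card L + card F = n" by (rule card_S0)
  then show ?thesis using opt unfolding L_def F_def N_SCC_def by linarith
qed

end
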